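(* Let $X$ be a proper metric space and $Y$ a geodesic metric space. Let $F\colon X\to Y$ be an $L$-Lipschitz quotient mapping, and suppose $F$ is injective on $B(x,r)$ for some $x\in X$, $r>0$. Then $F$ is $L$-bilipschitz on $B(x,r/(1+2L^2))$, i.e. $L^{-1}d(p,q)\le d(F(p),F(q))\le L\,d(p,q)$ for all $p,q\in B(x,r/(1+2L^2))$.
   Context: A metric space is proper if closed balls are compact, and geodesic if any two points are joined by a curve whose length equals their distance. $F$ is an $L$-Lipschitz quotient ($L$-LQ) mapping, $L\ge1$, if $B(F(x),r/L)\subseteq F(B(x,r))\subseteq B(F(x),Lr)$ for all $x\in X$, $r>0$ ($B$ = open balls). *)

theory Defs
  imports "HOL-Analysis.Analysis"
begin

definition proper_space :: "'a::metric_space itself \<Rightarrow> bool" where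
  "proper_space _ \<longleftrightarrow> (\<forall>(x::'a) r. compact (cball x r))"

definition curve_length :: "(real \<Rightarrow> 'a::metric_space) \<Rightarrow> ereal" where
  "curve_length g =
     (SUP nt \<in> {(n::nat, t::nat \<Rightarrow> real). t 0 = 0 \<and> t n = 1 \<and> (\<forall>i<n. t i \<le> t (Suc i))}.
        ereal (\<Sum>i<fst nt. dist (g (snd nt i)) (g (snd nt (Suc i)))))"

definition geodesic_space :: "'a::metric_space itself \<Rightarrow> bool" where
  "geodesic_space _ \<longleftrightarrow>
     (\<forall>p q::'a. \<exists>g. continuous_on {0..1} g \<and> g 0 = p \<and> g 1 = q
                    \<and> curve_length g = ereal (dist p q))"

definition LQ_map :: "real \<Rightarrow> ('a::metric_space \<Rightarrow> 'b::metric_space) \<Rightarrow> bool" where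
  "LQ_map L F \<longleftrightarrow> (\<forall>x r. r > 0 \<longrightarrow>
      ball (F x) (r / L) \<subseteq> F ` ball x r \<and> F ` ball x r \<subseteq> ball (F x) (L * r))"

end

theory Submission
  imports Defs
begin

theorem lemma3p6:
  fixes F :: "'a::metric_space \<Rightarrow> 'b::metric_space"
    and L r :: real and x :: 'a
  assumes "proper_space TYPE('a)"
    and "geodesic_space TYPE('b)"
    and "L \<ge> 1"
    and "LQ_map L F"
    and "r > 0"
    and "inj_on F (ball x r)"
  shows "\<forall>p \<in> ball x (r / (1 + 2 * L\<^sup>2)). \<forall>q \<in> ball x (r / (1 + 2 * L\<^sup>2)).
           dist p q / L \<le> dist (F p) (F q) \<and> dist (F p) (F q) \<le> L * dist p q"
proof (intro ballI)
  fix p q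
  define \<rho> where "\<rho> = r / (1 + 2 * L\<^sup>2)"
  assume p: "p \<in> ball x (r / (1 + 2 * L\<^sup>2))" and q: "q \<in> ball x (r / (1 + 2 * L\<^sup>2))"
  have L0: "L > 0" using assms(3) by simp
  have den: "1 + 2 * L\<^sup>2 > 0" by (simp add: add_pos_nonneg)
  have r_eq: "r = \<rho> * (1 + 2 * L\<^sup>2)" using den by (simp add: \<rho>_def)
  have rho_le: "\<rho> \<le> r"
  proof -
    have "r / (1 + 2 * L\<^sup>2) \<le> r / 1"
      by (rule divide_left_mono) (use assms(5) den in auto)
    thus ?thesis by (simp add: \<rho>_def)
  qed
  have xp: "dist x p < \<rho>" and xq: "dist x q < \<rho>" using p q by (auto simp: \<rho>_def)
  have dpq: "dist p q < 2 * \<rho>" using xp xq dist_triangle[of p q x] dist_commute[of x p] by linarith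
  have LQ: "\<And>y t. t > 0 \<Longrightarrow> ball (F y) (t / L) \<subseteq> F ` ball y t \<and> F ` ball y t \<subseteq> ball (F y) (L * t)"
    using assms(4) unfolding LQ_map_def by blast
  define d where "d = dist p q"
  define s where "s = dist (F p) (F q)"
  have up: "s \<le> L * d"
  proof (rule ccontr)
    assume "\<not> s \<le> L * d"
    hence gt: "s > L * d" by simp
    define e where "e = (s - L * d) / L"
    have e0: "e > 0" using gt L0 by (simp add: e_def)
    have "d + e > 0" using e0 zero_le_dist[of p q] unfolding d_def by linarith
    hence "F ` ball p (d + e) \<subseteq> ball (F p) (L * (d + e))" using LQ by blast
    moreover have "q \<in> ball p (d + e)" using e0 by (simp add: d_def)
    ultimately have "F q \<in> ball (F p) (L * (d + e))" by blast
    hence "s < L * (d + e)" by (simp add: s_def)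
    moreover have "L * (d + e) = s" using L0 by (simp add: e_def field_simps)
    ultimately show False by simp
  qed
  have low: "d \<le> L * s"
  proof (rule ccontr)
    assume "\<not> d \<le> L * s"
    hence gt: "d > L * s" by simp
    have "L * s \<le> L * (L * d)" using up L0 by simp
    also have "\<dots> < L * (L * (2 * \<rho>))" using dpq L0 by (simp add: d_def)
    finally have Ls: "L * s < 2 * L\<^sup>2 * \<rho>" by (simp add: power2_eq_square)
    have room: "dist x p + L * s < r" using Ls xp r_eq by (simp add: algebra_simps)
    define \<delta> where "\<delta> = min (d - L * s) (r - dist x p - L * s) / 2"
    have \<delta>0: "\<delta> > 0" using gt room by (simp add: \<delta>_def)
    define t where "t = L * s + \<delta>"
    have s0: "s \<ge> 0" by (simp add: s_def)
    have t0: "t > 0" using \<delta>0 mult_nonneg_nonneg[of L s] s0 L0 unfolding t_def by linarith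
    have td: "t < d" using gt min.cobounded1[of "d - L * s" "r - dist x p - L * s"] unfolding t_def \<delta>_def by argo
    have tr: "dist x p + t < r" using room min.cobounded2[of "d - L * s" "r - dist x p - L * s"] unfolding t_def \<delta>_def by argo
    have "s < t / L" using L0 \<delta>0 by (simp add: t_def field_simps)
    hence "F q \<in> ball (F p) (t / L)" by (simp add: s_def)
    hence "F q \<in> F ` ball p t" using LQ[OF t0] by blast
    then obtain q' where q': "q' \<in> ball p t" "F q' = F q" by auto
    have "dist x q' \<le> dist x p + dist p q'" by (rule dist_triangle)
    hence "q' \<in> ball x r" using q' tr by simp
    moreover have "q \<in> ball x r" using xq rho_le by simp
    ultimately have "q' = q" using assms(6) q'(2) by (meson inj_onD)
    hence "d < t" using q' by (simp add: d_def)
    thus False using td by simp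
  qed
  show "dist p q / L \<le> dist (F p) (F q) \<and> dist (F p) (F q) \<le> L * dist p q"
    using up low L0 by (simp add: d_def s_def divide_le_eq mult.commute)
qed

end
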